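(* Let $\theta_n>0$ and let $L_n\ge1$ be an integer. Let $X$ be a real tensor (the output of the first MatMul layer of a network on a given input, which is computed identically in the ANN and in the PASC SNN). Let $z^l=\widehat h(X)$ be the output of the first QCFS activation layer of the ANN, and let $s^l=(s^l(1),\dots,s^l(L_n))$ be the output of the PASC input-layer procedure (described in the context) on $X$. Then (a) $\sum_{i=1}^{L_n}s^l(i)=z^l$, and (b) every entry of $s^l$ lies in the set $\{0,\theta_n/L_n\}$.
   Context: The QCFS activation with quantization step $L_n$ and threshold $\theta_n$ is $\widehat h(X)=\theta_n\,\mathrm{clip}\!\left(\frac{1}{L_n}\left\lfloor \frac{X L_n}{\theta_n}+\frac12\right\rfloor,0,1\right)$ (elementwise), where $\mathrm{clip}(y,0,1)=\min(\max(y,0),1)$. $H$ denotes the Heaviside step function, $H(y)=1$ if $y\ge0$ and $0$ otherwise. PASC input-layer procedure (elementwise): set $\theta^*=\theta_n/L_n$ and initial membrane potential $\mathrm{mem}(0)=\widehat h(X)$; for $t=1,\dots,L_n$ set $s^l(t)=H(\mathrm{mem}(t-1)-\theta^* )\cdot\theta^*$ and $\mathrm{mem}(t)=\mathrm{mem}(t-1)-s^l(t)$; the output is the stack $s^l$ of $s^l(1),\dots,s^l(L_n)$. *)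

theory Defs
  imports Main Complex_Main
begin

definition clip01 :: "real \<Rightarrow> real" where
  "clip01 y = min (max y 0) 1"

definition heaviside :: "real \<Rightarrow> real" where
  "heaviside y = (if y \<ge> 0 then 1 else 0)"

definition qcfs :: "real \<Rightarrow> nat \<Rightarrow> real \<Rightarrow> real" where
  "qcfs theta L x = theta * clip01 ((1 / real L) * real_of_int \<lfloor>x * real L / theta + 1/2\<rfloor>)"

definition qcfs_tensor :: "real \<Rightarrow> nat \<Rightarrow> ('i \<Rightarrow> real) \<Rightarrow> ('i \<Rightarrow> real)" where
  "qcfs_tensor theta L X = (\<lambda>i. qcfs theta L (X i))"

text \<open>PASC input layer: membrane potential mem(t), with theta* = theta / L.\<close>
primrec pasc_mem :: "real \<Rightarrow> nat \<Rightarrow> real \<Rightarrow> nat \<Rightarrow> real" where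
  "pasc_mem theta L x 0 = qcfs theta L x"
| "pasc_mem theta L x (Suc t) =
     pasc_mem theta L x t - heaviside (pasc_mem theta L x t - theta / real L) * (theta / real L)"

text \<open>Spike at time step t (meaningful for 1 <= t <= L): s(t) = H(mem(t-1) - theta*) * theta*.\<close>
definition pasc_spike :: "real \<Rightarrow> nat \<Rightarrow> real \<Rightarrow> nat \<Rightarrow> real" where
  "pasc_spike theta L x t = heaviside (pasc_mem theta L x (t - 1) - theta / real L) * (theta / real L)"

definition pasc_input :: "real \<Rightarrow> nat \<Rightarrow> ('i \<Rightarrow> real) \<Rightarrow> nat \<Rightarrow> 'i \<Rightarrow> real" where
  "pasc_input theta L X = (\<lambda>t i. pasc_spike theta L (X i) t)"

end

theory Submission
  imports Defs
begin

lemma qcfs_k: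
  assumes "theta > 0" "L \<ge> 1"
  shows "\<exists>k::nat. k \<le> L \<and> qcfs theta L x = theta / real L * real k"
proof -
  define m where "m = \<lfloor>x * real L / theta + 1/2\<rfloor>"
  define k where "k = nat (min (max m 0) (int L))"
  have kL: "k \<le> L" unfolding k_def by linarith
  have Lp: "real L > 0" using assms by simp
  have "clip01 ((1 / real L) * real_of_int m) = real k / real L"
  proof -
    have "clip01 ((1 / real L) * real_of_int m) = min (max (real_of_int m / real L) 0) 1"
      unfolding clip01_def by simp
    also have "\<dots> = min (max (real_of_int m) 0) (real L) / real L"
      using Lp by (auto simp: min_def max_def field_simps)
    also have "min (max (real_of_int m) 0) (real L) = real k"
      unfolding k_def by (simp add: min_def max_def)
    finally show ?thesis .
  qed
  hence "qcfs theta L x = theta / real L * real k"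
    unfolding qcfs_def m_def by simp
  thus ?thesis using kL by blast
qed

lemma mem_form:
  assumes "theta > 0" "L \<ge> 1" "qcfs theta L x = theta / real L * real k"
  shows "pasc_mem theta L x t = theta / real L * real (k - t)"
proof (induction t)
  case 0 then show ?case using assms by simp
next
  case (Suc t)
  have dp: "theta / real L > 0" using assms by simp
  show ?case
  proof (cases "k - t \<ge> 1")
    case True
    have "real (k - Suc t) = real (k - t) - 1" using True by simp
    have ge: "real (k - t) \<ge> 1" using True by simp
    have "pasc_mem theta L x t \<ge> theta / real L"
      using Suc.IH mult_left_mono[OF ge less_imp_le[OF dp]] by simp
    hence "pasc_mem theta L x (Suc t) = pasc_mem theta L x t - theta / real L"
      by (simp add: heaviside_def)
    also have "\<dots> = theta / real L * real (k - Suc t)"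
    proof -
      have aux: "\<And>d a b::real. b = a - 1 \<Longrightarrow> d*a - d = d*b" by (simp add: right_diff_distrib)
      show ?thesis unfolding Suc.IH
        by (rule aux) (fact \<open>real (k - Suc t) = real (k - t) - 1\<close>)
    qed
    finally show ?thesis .
  next
    case False
    hence "k - t = 0" "k - Suc t = 0" by auto
    then show ?thesis using Suc dp by (simp add: heaviside_def)
  qed
qed

lemma spike_form:
  assumes "theta > 0" "L \<ge> 1" "qcfs theta L x = theta / real L * real k" "t \<ge> 1"
  shows "pasc_spike theta L x t = (if t \<le> k then theta / real L else 0)"
proof -
  have dp: "theta / real L > 0" using assms by simp
  have m: "pasc_mem theta L x (t - 1) = theta / real L * real (k - (t - 1))"
    using mem_form[OF assms(1-3)] .
  show ?thesis
  proof (cases "t \<le> k")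
    case True
    hence "real (k - (t - 1)) \<ge> 1" using assms(4) by simp
    hence "theta / real L * real (k - (t - 1)) \<ge> theta / real L" using dp
      by (metis mult.right_neutral mult_left_mono less_imp_le)
    then show ?thesis using True unfolding pasc_spike_def m heaviside_def by simp
  next
    case False
    hence "k - (t - 1) = 0" by simp
    then show ?thesis using False dp unfolding pasc_spike_def m heaviside_def by simp
  qed
qed

theorem theorem3:
  fixes theta :: real and L :: nat and X :: "'i \<Rightarrow> real"
  assumes "theta > 0" and "L \<ge> 1"
  shows "(\<lambda>i. \<Sum>t = 1..L. pasc_input theta L X t i) = qcfs_tensor theta L X
         \<and> (\<forall>t \<in> {1..L}. \<forall>i. pasc_input theta L X t i \<in> {0, theta / real L})"
proof
  show "(\<lambda>i. \<Sum>t = 1..L. pasc_input theta L X t i) = qcfs_tensor theta L X"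
  proof
    fix i
    obtain k where k: "k \<le> L" "qcfs theta L (X i) = theta / real L * real k"
      using qcfs_k[OF assms] by blast
    have "(\<Sum>t = 1..L. pasc_input theta L X t i) = (\<Sum>t = 1..L. if t \<le> k then theta / real L else 0)"
      unfolding pasc_input_def using spike_form[OF assms k(2)] by (intro sum.cong) auto
    also have "\<dots> = (\<Sum>t \<in> {1..k}. theta / real L)"
    proof -
      have "{1..k} \<subseteq> {1..L}" using k(1) by auto
      moreover have "\<forall>t\<in>{1..L} - {1..k}. (if t \<le> k then theta / real L else 0) = 0" by auto
      moreover have "\<forall>t\<in>{1..k}. (if t \<le> k then theta / real L else 0) = theta / real L" by auto
      ultimately show ?thesis
        using sum.mono_neutral_cong_right[of "{1..L}" "{1..k}" "\<lambda>t. if t \<le> k then theta / real L else 0" "\<lambda>t. theta / real L"]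
        by auto
    qed
    also have "\<dots> = qcfs theta L (X i)" using k(2) by simp
    finally show "(\<Sum>t = 1..L. pasc_input theta L X t i) = qcfs_tensor theta L X i"
      unfolding qcfs_tensor_def by simp
  qed
next
  show "\<forall>t \<in> {1..L}. \<forall>i. pasc_input theta L X t i \<in> {0, theta / real L}"
  proof (intro ballI allI)
    fix t i assume t: "t \<in> {1..L}"
    obtain k where k: "k \<le> L" "qcfs theta L (X i) = theta / real L * real k"
      using qcfs_k[OF assms] by blast
    show "pasc_input theta L X t i \<in> {0, theta / real L}"
      unfolding pasc_input_def using spike_form[OF assms k(2)] t by auto
  qed
qed

end
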